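(* Let $\sigma$ be a set of atomic propositions and $P$ a finite set of proposition symbols disjoint from $\sigma$. For every set $L\subseteq L_\mu[\sigma\cup P]$ we have $\mathrm{CL}_P(\mathrm{CL}_P(L))=\mathrm{CL}_P(L)$.
   Context: $L_\mu[\tau]$ is the modal $\mu$-calculus over propositions $\tau$: formulas from $\top,\bot$, $R,\neg R$, fixpoint variables, $\wedge,\vee,\Diamond,\Box,\mu X.\cdot,\nu X.\cdot$. **Closure $\mathrm{CL}$.** For a formula $\varphi$, $\mathrm{CL}(\varphi)$ is its Fischer–Ladner closure: for each occurrence of a non-variable subformula $\psi$ of $\varphi$, the closed formula obtained from $\psi$ by repeatedly replacing free fixpoint variables by their defining fixpoint subformulas $\mu X.\chi$ or $\nu X.\chi$ in $\varphi$. $\mathrm{CL}(L)=\bigcup_{\varphi\in L}\mathrm{CL}(\varphi)$ (as a set of formulas). **Priority tracking variants.** A priority tracking variant of $\varphi$ is obtained by applying, for each subformula occurrence of the form $\Diamond\chi$ or $\Box\chi$, the following operation with a freely chosen $Q\subseteq P$: - replace $\Diamond\chi$ by $(\bigvee_{R\in Q}R)\vee\Diamond\chi$; - replace $\Box\chi$ by $(\bigwedge_{R\in Q}\neg R)\wedge\Box\chi$. $\mathrm{PT}_P(\varphi)$ is the set of all such variants, $\mathrm{PT}_P(L)=\bigcup_{\varphi\in L}\mathrm{PT}_P(\varphi)$, and $\mathrm{CL}_P(L)=\mathrm{PT}_P(\mathrm{CL}(L))$. *)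

theory Defs
  imports Main
begin

text \<open>Syntax of the modal mu-calculus over propositions of type 'a, with fixpoint
variables as de Bruijn indices (Var 0 refers to the innermost enclosing binder).
The modal constructors carry a finite set Q of propositions:
  Dia Q chi  stands for  (OR of R for R in Q) \<or> Dia chi,
  Box Q chi  stands for  (AND of not R for R in Q) \<and> Box chi.
Plain modalities are Dia {} chi and Box {} chi.\<close>

datatype 'a fm =
    Top | Bot | Prop 'a | NProp 'a | Var nat
  | And "'a fm" "'a fm" | Or "'a fm" "'a fm"
  | Dia "'a set" "'a fm" | Box "'a set" "'a fm"
  | Mu "'a fm" | Nu "'a fm"

fun lift :: "nat \<Rightarrow> 'a fm \<Rightarrow> 'a fm" where
  "lift k (Var n) = (if n < k then Var n else Var (Suc n))"
| "lift k (And a b) = And (lift k a) (lift k b)"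
| "lift k (Or a b) = Or (lift k a) (lift k b)"
| "lift k (Dia Q a) = Dia Q (lift k a)"
| "lift k (Box Q a) = Box Q (lift k a)"
| "lift k (Mu a) = Mu (lift (Suc k) a)"
| "lift k (Nu a) = Nu (lift (Suc k) a)"
| "lift k Top = Top"
| "lift k Bot = Bot"
| "lift k (Prop r) = Prop r"
| "lift k (NProp r) = NProp r"

fun subst :: "(nat \<Rightarrow> 'a fm) \<Rightarrow> 'a fm \<Rightarrow> 'a fm" where
  "subst \<rho> (Var n) = \<rho> n"
| "subst \<rho> (And a b) = And (subst \<rho> a) (subst \<rho> b)"
| "subst \<rho> (Or a b) = Or (subst \<rho> a) (subst \<rho> b)"
| "subst \<rho> (Dia Q a) = Dia Q (subst \<rho> a)"
| "subst \<rho> (Box Q a) = Box Q (subst \<rho> a)"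
| "subst \<rho> (Mu a) = Mu (subst (case_nat (Var 0) (lift 0 \<circ> \<rho>)) a)"
| "subst \<rho> (Nu a) = Nu (subst (case_nat (Var 0) (lift 0 \<circ> \<rho>)) a)"
| "subst \<rho> Top = Top"
| "subst \<rho> Bot = Bot"
| "subst \<rho> (Prop r) = Prop r"
| "subst \<rho> (NProp r) = NProp r"

text \<open>cls rho psi: for every non-variable subformula occurrence of psi, the formula
obtained by replacing its free fixpoint variables by (the expansions of) their
defining fixpoint subformulas; rho maps the free indices of psi to those expansions.\<close>
fun cls :: "(nat \<Rightarrow> 'a fm) \<Rightarrow> 'a fm \<Rightarrow> 'a fm set" where
  "cls \<rho> (Var n) = {}"
| "cls \<rho> (And a b) = {subst \<rho> (And a b)} \<union> cls \<rho> a \<union> cls \<rho> b"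
| "cls \<rho> (Or a b) = {subst \<rho> (Or a b)} \<union> cls \<rho> a \<union> cls \<rho> b"
| "cls \<rho> (Dia Q a) = {subst \<rho> (Dia Q a)} \<union> cls \<rho> a"
| "cls \<rho> (Box Q a) = {subst \<rho> (Box Q a)} \<union> cls \<rho> a"
| "cls \<rho> (Mu a) = {subst \<rho> (Mu a)} \<union> cls (case_nat (subst \<rho> (Mu a)) \<rho>) a"
| "cls \<rho> (Nu a) = {subst \<rho> (Nu a)} \<union> cls (case_nat (subst \<rho> (Nu a)) \<rho>) a"
| "cls \<rho> Top = {Top}"
| "cls \<rho> Bot = {Bot}"
| "cls \<rho> (Prop r) = {Prop r}"
| "cls \<rho> (NProp r) = {NProp r}"

definition CL :: "'a fm \<Rightarrow> 'a fm set" where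
  "CL \<phi> = cls Var \<phi>"

definition CLs :: "'a fm set \<Rightarrow> 'a fm set" where
  "CLs L = (\<Union>\<phi>\<in>L. CL \<phi>)"

text \<open>Priority tracking variants: at every modal occurrence a set Q' \<subseteq> P is chosen
and added as disjuncts (resp. negated conjuncts); adding Q' to an already
annotated modality Q yields the annotation Q \<union> Q'.\<close>
fun PT :: "'a set \<Rightarrow> 'a fm \<Rightarrow> 'a fm set" where
  "PT P (Var n) = {Var n}"
| "PT P (And a b) = {And a' b' | a' b'. a' \<in> PT P a \<and> b' \<in> PT P b}"
| "PT P (Or a b) = {Or a' b' | a' b'. a' \<in> PT P a \<and> b' \<in> PT P b}"
| "PT P (Dia Q a) = {Dia (Q \<union> Q') a' | Q' a'. Q' \<subseteq> P \<and> a' \<in> PT P a}"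
| "PT P (Box Q a) = {Box (Q \<union> Q') a' | Q' a'. Q' \<subseteq> P \<and> a' \<in> PT P a}"
| "PT P (Mu a) = Mu ` PT P a"
| "PT P (Nu a) = Nu ` PT P a"
| "PT P Top = {Top}"
| "PT P Bot = {Bot}"
| "PT P (Prop r) = {Prop r}"
| "PT P (NProp r) = {NProp r}"

definition PTs :: "'a set \<Rightarrow> 'a fm set \<Rightarrow> 'a fm set" where
  "PTs P L = (\<Union>\<phi>\<in>L. PT P \<phi>)"

definition CL_P :: "'a set \<Rightarrow> 'a fm set \<Rightarrow> 'a fm set" where
  "CL_P P L = PTs P (CLs L)"

fun plain :: "'a fm \<Rightarrow> bool" where
  "plain (And a b) = (plain a \<and> plain b)"
| "plain (Or a b) = (plain a \<and> plain b)"
| "plain (Dia Q a) = (Q = {} \<and> plain a)"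
| "plain (Box Q a) = (Q = {} \<and> plain a)"
| "plain (Mu a) = plain a"
| "plain (Nu a) = plain a"
| "plain _ = True"

fun props :: "'a fm \<Rightarrow> 'a set" where
  "props (Prop r) = {r}"
| "props (NProp r) = {r}"
| "props (And a b) = props a \<union> props b"
| "props (Or a b) = props a \<union> props b"
| "props (Dia Q a) = Q \<union> props a"
| "props (Box Q a) = Q \<union> props a"
| "props (Mu a) = props a"
| "props (Nu a) = props a"
| "props _ = {}"

definition Lmu :: "'a set \<Rightarrow> 'a fm set" where
  "Lmu \<tau> = {\<phi>. plain \<phi> \<and> props \<phi> \<subseteq> \<tau>}"

end

theory Submission
  imports Defs
begin

definition skip :: "nat \<Rightarrow> nat \<Rightarrow> nat" where
  "skip k n = (if n < k then n else Suc n)"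

lemma lift_lift: "j \<le> k \<Longrightarrow> lift (Suc k) (lift j t) = lift j (lift k t)"
  by (induction t arbitrary: j k) auto

lemma lift_subst: "lift k (subst \<sigma> t) = subst (lift k \<circ> \<sigma>) t"
proof (induction t arbitrary: k \<sigma>)
  case (Mu t)
  have "lift (Suc k) \<circ> case_nat (Var 0) (lift 0 \<circ> \<sigma>) = case_nat (Var 0) (lift 0 \<circ> (lift k \<circ> \<sigma>))"
    by (rule ext, case_tac x) (auto simp: lift_lift)
  then show ?case by (simp only: lift.simps subst.simps Mu.IH)
next
  case (Nu t)
  have "lift (Suc k) \<circ> case_nat (Var 0) (lift 0 \<circ> \<sigma>) = case_nat (Var 0) (lift 0 \<circ> (lift k \<circ> \<sigma>))"
    by (rule ext, case_tac x) (auto simp: lift_lift)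
  then show ?case by (simp only: lift.simps subst.simps Nu.IH)
qed auto

lemma subst_lift: "subst \<sigma> (lift k b) = subst (\<sigma> \<circ> skip k) b"
proof (induction b arbitrary: k \<sigma>)
  case (Mu t)
  have "case_nat (Var 0) (lift 0 \<circ> \<sigma>) \<circ> skip (Suc k) = case_nat (Var 0) (lift 0 \<circ> (\<sigma> \<circ> skip k))"
    by (rule ext, case_tac x) (auto simp: skip_def)
  then show ?case by (simp only: lift.simps subst.simps Mu.IH)
next
  case (Nu t)
  have "case_nat (Var 0) (lift 0 \<circ> \<sigma>) \<circ> skip (Suc k) = case_nat (Var 0) (lift 0 \<circ> (\<sigma> \<circ> skip k))"
    by (rule ext, case_tac x) (auto simp: skip_def)
  then show ?case by (simp only: lift.simps subst.simps Nu.IH)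
qed (auto simp: skip_def)

lemma skip0: "\<sigma> \<circ> skip 0 = \<sigma> \<circ> Suc"
  by (auto simp: skip_def)

lemma cn_Suc: "case_nat a f \<circ> Suc = f"
  by (rule ext) simp

lemma subst_subst: "subst \<sigma> (subst \<tau> a) = subst (subst \<sigma> \<circ> \<tau>) a"
proof (induction a arbitrary: \<sigma> \<tau>)
  case (Mu t)
  have "subst (case_nat (Var 0) (lift 0 \<circ> \<sigma>)) \<circ> case_nat (Var 0) (lift 0 \<circ> \<tau>)
     = case_nat (Var 0) (lift 0 \<circ> (subst \<sigma> \<circ> \<tau>))"
    by (rule ext, case_tac x) (simp_all add: subst_lift skip0 lift_subst cn_Suc)
  then show ?case by (simp only: lift.simps subst.simps Mu.IH)
next
  case (Nu t)
  have "subst (case_nat (Var 0) (lift 0 \<circ> \<sigma>)) \<circ> case_nat (Var 0) (lift 0 \<circ> \<tau>)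
     = case_nat (Var 0) (lift 0 \<circ> (subst \<sigma> \<circ> \<tau>))"
    by (rule ext, case_tac x) (simp_all add: subst_lift skip0 lift_subst cn_Suc)
  then show ?case by (simp only: lift.simps subst.simps Nu.IH)
qed auto

lemma subst_Var: "subst Var a = a"
proof -
  have V: "case_nat (Var 0) (lift 0 \<circ> Var) = Var"
    by (rule ext, case_tac x) auto
  show ?thesis by (induction a) (auto simp: V)
qed

lemma cls_lift: "cls \<sigma> (lift k t) = cls (\<sigma> \<circ> skip k) t"
proof (induction t arbitrary: k \<sigma>)
  case (Mu t)
  have "case_nat (subst \<sigma> (Mu (lift (Suc k) t))) \<sigma> \<circ> skip (Suc k)
      = case_nat (subst (\<sigma> \<circ> skip k) (Mu t)) (\<sigma> \<circ> skip k)"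
    using subst_lift[of \<sigma> k "Mu t"]
    by (intro ext, case_tac x) (auto simp: skip_def)
  then show ?case by (simp only: lift.simps cls.simps Mu.IH subst_lift[of \<sigma> k "Mu t", simplified lift.simps])
next
  case (Nu t)
  have "case_nat (subst \<sigma> (Nu (lift (Suc k) t))) \<sigma> \<circ> skip (Suc k)
      = case_nat (subst (\<sigma> \<circ> skip k) (Nu t)) (\<sigma> \<circ> skip k)"
    using subst_lift[of \<sigma> k "Nu t"]
    by (intro ext, case_tac x) (auto simp: skip_def)
  then show ?case by (simp only: lift.simps cls.simps Nu.IH subst_lift[of \<sigma> k "Nu t", simplified lift.simps])
qed (auto simp: subst_lift)


lemma cls_subst: "cls \<sigma> (subst \<tau> a) \<subseteq> cls (subst \<sigma> \<circ> \<tau>) a \<union> (\<Union>n. cls \<sigma> (\<tau> n))"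
proof (induction a arbitrary: \<sigma> \<tau>)
  case (Var x)
  then show ?case by auto
next
  case (Mu a)
  define \<tau>' where "\<tau>' = case_nat (Var 0) (lift 0 \<circ> \<tau>)"
  define \<sigma>' where "\<sigma>' = case_nat (subst (subst \<sigma> \<circ> \<tau>) (Mu a)) \<sigma>"
  have e1: "subst \<sigma> (Mu (subst \<tau>' a)) = subst (subst \<sigma> \<circ> \<tau>) (Mu a)"
    proof -
    have "Mu (subst \<tau>' a) = subst \<tau> (Mu a)" by (simp add: \<tau>'_def)
    then show ?thesis using subst_subst[of \<sigma> \<tau> "Mu a"] by metis
  qed
  have e2: "subst \<sigma>' \<circ> \<tau>' = case_nat (subst (subst \<sigma> \<circ> \<tau>) (Mu a)) (subst \<sigma> \<circ> \<tau>)"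
    by (rule ext, case_tac x) (simp_all add: \<tau>'_def \<sigma>'_def e1 subst_lift skip0 cn_Suc)
  have e3: "(\<Union>n. cls \<sigma>' (\<tau>' n)) \<subseteq> (\<Union>n. cls \<sigma> (\<tau> n))"
  proof
    fix x assume "x \<in> (\<Union>n. cls \<sigma>' (\<tau>' n))"
    then obtain n where "x \<in> cls \<sigma>' (\<tau>' n)" by blast
    then show "x \<in> (\<Union>n. cls \<sigma> (\<tau> n))"
      by (cases n) (auto simp: \<tau>'_def \<sigma>'_def cls_lift skip0 cn_Suc)
  qed
  have "cls \<sigma> (subst \<tau> (Mu a)) = cls \<sigma> (Mu (subst \<tau>' a))" by (simp add: \<tau>'_def)
  also have "\<dots> = {subst \<sigma> (Mu (subst \<tau>' a))} \<union> cls (case_nat (subst \<sigma> (Mu (subst \<tau>' a))) \<sigma>) (subst \<tau>' a)"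
    by (rule cls.simps)
  also have "\<dots> = {subst \<sigma> (Mu (subst \<tau>' a))} \<union> cls \<sigma>' (subst \<tau>' a)"
    by (simp only: e1 \<sigma>'_def)
  also have "\<dots> \<subseteq> {subst (subst \<sigma> \<circ> \<tau>) (Mu a)} \<union> cls (subst \<sigma>' \<circ> \<tau>') a \<union> (\<Union>n. cls \<sigma>' (\<tau>' n))"
    using Mu.IH[of \<sigma>' \<tau>'] e1 by blast
  also have "\<dots> \<subseteq> cls (subst \<sigma> \<circ> \<tau>) (Mu a) \<union> (\<Union>n. cls \<sigma> (\<tau> n))"
    using e2 e3 by auto
  finally show ?case .
next
  case (Nu a)
  define \<tau>' where "\<tau>' = case_nat (Var 0) (lift 0 \<circ> \<tau>)"
  define \<sigma>' where "\<sigma>' = case_nat (subst (subst \<sigma> \<circ> \<tau>) (Nu a)) \<sigma>"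
  have e1: "subst \<sigma> (Nu (subst \<tau>' a)) = subst (subst \<sigma> \<circ> \<tau>) (Nu a)"
    proof -
    have "Nu (subst \<tau>' a) = subst \<tau> (Nu a)" by (simp add: \<tau>'_def)
    then show ?thesis using subst_subst[of \<sigma> \<tau> "Nu a"] by metis
  qed
  have e2: "subst \<sigma>' \<circ> \<tau>' = case_nat (subst (subst \<sigma> \<circ> \<tau>) (Nu a)) (subst \<sigma> \<circ> \<tau>)"
    by (rule ext, case_tac x) (simp_all add: \<tau>'_def \<sigma>'_def e1 subst_lift skip0 cn_Suc)
  have e3: "(\<Union>n. cls \<sigma>' (\<tau>' n)) \<subseteq> (\<Union>n. cls \<sigma> (\<tau> n))"
  proof
    fix x assume "x \<in> (\<Union>n. cls \<sigma>' (\<tau>' n))"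
    then obtain n where "x \<in> cls \<sigma>' (\<tau>' n)" by blast
    then show "x \<in> (\<Union>n. cls \<sigma> (\<tau> n))"
      by (cases n) (auto simp: \<tau>'_def \<sigma>'_def cls_lift skip0 cn_Suc)
  qed
  have "cls \<sigma> (subst \<tau> (Nu a)) = cls \<sigma> (Nu (subst \<tau>' a))" by (simp add: \<tau>'_def)
  also have "\<dots> = {subst \<sigma> (Nu (subst \<tau>' a))} \<union> cls (case_nat (subst \<sigma> (Nu (subst \<tau>' a))) \<sigma>) (subst \<tau>' a)"
    by (rule cls.simps)
  also have "\<dots> = {subst \<sigma> (Nu (subst \<tau>' a))} \<union> cls \<sigma>' (subst \<tau>' a)"
    by (simp only: e1 \<sigma>'_def)
  also have "\<dots> \<subseteq> {subst (subst \<sigma> \<circ> \<tau>) (Nu a)} \<union> cls (subst \<sigma>' \<circ> \<tau>') a \<union> (\<Union>n. cls \<sigma>' (\<tau>' n))"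
    using Nu.IH[of \<sigma>' \<tau>'] e1 by blast
  also have "\<dots> \<subseteq> cls (subst \<sigma> \<circ> \<tau>) (Nu a) \<union> (\<Union>n. cls \<sigma> (\<tau> n))"
    using e2 e3 by auto
  finally show ?case .
next
  case (And a b)
  have "cls \<sigma> (subst \<tau> (And a b)) = {subst \<sigma> (subst \<tau> (And a b))} \<union> cls \<sigma> (subst \<tau> a) \<union> cls \<sigma> (subst \<tau> b)" by simp
  moreover have "cls (subst \<sigma> \<circ> \<tau>) (And a b) = {subst (subst \<sigma> \<circ> \<tau>) (And a b)} \<union> cls (subst \<sigma> \<circ> \<tau>) a \<union> cls (subst \<sigma> \<circ> \<tau>) b" by (rule cls.simps)
  ultimately show ?case using And.IH(1)[of \<sigma> \<tau>] And.IH(2)[of \<sigma> \<tau>] unfolding subst_subst by blast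
next
  case (Or a b)
  have "cls \<sigma> (subst \<tau> (Or a b)) = {subst \<sigma> (subst \<tau> (Or a b))} \<union> cls \<sigma> (subst \<tau> a) \<union> cls \<sigma> (subst \<tau> b)" by simp
  moreover have "cls (subst \<sigma> \<circ> \<tau>) (Or a b) = {subst (subst \<sigma> \<circ> \<tau>) (Or a b)} \<union> cls (subst \<sigma> \<circ> \<tau>) a \<union> cls (subst \<sigma> \<circ> \<tau>) b" by (rule cls.simps)
  ultimately show ?case using Or.IH(1)[of \<sigma> \<tau>] Or.IH(2)[of \<sigma> \<tau>] unfolding subst_subst by blast
next
  case (Dia Q a)
  have "cls \<sigma> (subst \<tau> (Dia Q a)) = {subst \<sigma> (subst \<tau> (Dia Q a))} \<union> cls \<sigma> (subst \<tau> a)" by simp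
  moreover have "cls (subst \<sigma> \<circ> \<tau>) (Dia Q a) = {subst (subst \<sigma> \<circ> \<tau>) (Dia Q a)} \<union> cls (subst \<sigma> \<circ> \<tau>) a" by (rule cls.simps)
  ultimately show ?case using Dia.IH[of \<sigma> \<tau>] unfolding subst_subst by blast
next
  case (Box Q a)
  have "cls \<sigma> (subst \<tau> (Box Q a)) = {subst \<sigma> (subst \<tau> (Box Q a))} \<union> cls \<sigma> (subst \<tau> a)" by simp
  moreover have "cls (subst \<sigma> \<circ> \<tau>) (Box Q a) = {subst (subst \<sigma> \<circ> \<tau>) (Box Q a)} \<union> cls (subst \<sigma> \<circ> \<tau>) a" by (rule cls.simps)
  ultimately show ?case using Box.IH[of \<sigma> \<tau>] unfolding subst_subst by blast
qed auto

lemma CL_subst: "CL (subst \<tau> a) \<subseteq> cls \<tau> a \<union> (\<Union>n. CL (\<tau> n))"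
  using cls_subst[of Var \<tau> a] by (simp add: CL_def subst_Var comp_def)

lemma CL_cls: "x \<in> cls \<rho> a \<Longrightarrow> CL x \<subseteq> cls \<rho> a \<union> (\<Union>n. CL (\<rho> n))"
proof (induction a arbitrary: \<rho> x)
  case (Mu a)
  let ?\<rho>' = "case_nat (subst \<rho> (Mu a)) \<rho>"
  have top: "CL (subst \<rho> (Mu a)) \<subseteq> cls \<rho> (Mu a) \<union> (\<Union>n. CL (\<rho> n))"
    by (rule CL_subst)
  have r: "(\<Union>n. CL (?\<rho>' n)) \<subseteq> cls \<rho> (Mu a) \<union> (\<Union>n. CL (\<rho> n))"
  proof
    fix y assume "y \<in> (\<Union>n. CL (?\<rho>' n))"
    then obtain n where "y \<in> CL (?\<rho>' n)" by blast
    then show "y \<in> cls \<rho> (Mu a) \<union> (\<Union>n. CL (\<rho> n))" using top by (cases n) auto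
  qed
  show ?case
  proof (cases "x = subst \<rho> (Mu a)")
    case True then show ?thesis using top by simp
  next
    case False
    then have "x \<in> cls ?\<rho>' a" using Mu.prems by simp
    then have "CL x \<subseteq> cls ?\<rho>' a \<union> (\<Union>n. CL (?\<rho>' n))" by (rule Mu.IH)
    then show ?thesis using r by auto
  qed
next
  case (Nu a)
  let ?\<rho>' = "case_nat (subst \<rho> (Nu a)) \<rho>"
  have top: "CL (subst \<rho> (Nu a)) \<subseteq> cls \<rho> (Nu a) \<union> (\<Union>n. CL (\<rho> n))"
    by (rule CL_subst)
  have r: "(\<Union>n. CL (?\<rho>' n)) \<subseteq> cls \<rho> (Nu a) \<union> (\<Union>n. CL (\<rho> n))"
  proof
    fix y assume "y \<in> (\<Union>n. CL (?\<rho>' n))"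
    then obtain n where "y \<in> CL (?\<rho>' n)" by blast
    then show "y \<in> cls \<rho> (Nu a) \<union> (\<Union>n. CL (\<rho> n))" using top by (cases n) auto
  qed
  show ?case
  proof (cases "x = subst \<rho> (Nu a)")
    case True then show ?thesis using top by simp
  next
    case False
    then have "x \<in> cls ?\<rho>' a" using Nu.prems by simp
    then have "CL x \<subseteq> cls ?\<rho>' a \<union> (\<Union>n. CL (?\<rho>' n))" by (rule Nu.IH)
    then show ?thesis using r by auto
  qed
next
  case (And a b)
  show ?case
  proof (cases "x = subst \<rho> (And a b)")
    case True then show ?thesis using CL_subst[of \<rho> "And a b"] by simp
  next
    case False
    then have "x \<in> cls \<rho> a \<or> x \<in> cls \<rho> b" using And.prems by simp
    then show ?thesis using And.IH[of x \<rho>] by auto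
  qed
next
  case (Or a b)
  show ?case
  proof (cases "x = subst \<rho> (Or a b)")
    case True then show ?thesis using CL_subst[of \<rho> "Or a b"] by simp
  next
    case False
    then have "x \<in> cls \<rho> a \<or> x \<in> cls \<rho> b" using Or.prems by simp
    then show ?thesis using Or.IH[of x \<rho>] by auto
  qed
next
  case (Dia Q a)
  show ?case
  proof (cases "x = subst \<rho> (Dia Q a)")
    case True then show ?thesis using CL_subst[of \<rho> "Dia Q a"] by simp
  next
    case False
    then have "x \<in> cls \<rho> a" using Dia.prems by simp
    then show ?thesis using Dia.IH[of x \<rho>] by auto
  qed
next
  case (Box Q a)
  show ?case
  proof (cases "x = subst \<rho> (Box Q a)")
    case True then show ?thesis using CL_subst[of \<rho> "Box Q a"] by simp
  next
    case False
    then have "x \<in> cls \<rho> a" using Box.prems by simp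
    then show ?thesis using Box.IH[of x \<rho>] by auto
  qed
qed (auto simp: CL_def)

lemma CL_CL: "x \<in> CL \<phi> \<Longrightarrow> CL x \<subseteq> CL \<phi>"
  using CL_cls[of x Var \<phi>] by (simp add: CL_def)

lemma PT_self: "a \<in> PT P a"
proof (induction a)
  case (Dia Q a) then show ?case
    by (subst PT.simps) (rule CollectI, rule exI[of _ "{}"], rule exI[of _ a], simp)
next
  case (Box Q a) then show ?case
    by (subst PT.simps) (rule CollectI, rule exI[of _ "{}"], rule exI[of _ a], simp)
qed auto

lemma PT_trans: "x \<in> PT P y \<Longrightarrow> y \<in> PT P z \<Longrightarrow> x \<in> PT P z"
proof (induction z arbitrary: x y)
  case (Dia Q a)
  from Dia.prems(2) obtain Q1 a1 where y: "y = Dia (Q \<union> Q1) a1" "Q1 \<subseteq> P" "a1 \<in> PT P a" by auto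
  from Dia.prems(1) y obtain Q2 a2 where x: "x = Dia (Q \<union> Q1 \<union> Q2) a2" "Q2 \<subseteq> P" "a2 \<in> PT P a1" by auto
  have "a2 \<in> PT P a" using Dia.IH x(3) y(3) by blast
  then show ?case using x y by (simp, rule_tac x="Q1 \<union> Q2" in exI) (auto simp: Un_assoc)
next
  case (Box Q a)
  from Box.prems(2) obtain Q1 a1 where y: "y = Box (Q \<union> Q1) a1" "Q1 \<subseteq> P" "a1 \<in> PT P a" by auto
  from Box.prems(1) y obtain Q2 a2 where x: "x = Box (Q \<union> Q1 \<union> Q2) a2" "Q2 \<subseteq> P" "a2 \<in> PT P a1" by auto
  have "a2 \<in> PT P a" using Box.IH x(3) y(3) by blast
  then show ?case using x y by (simp, rule_tac x="Q1 \<union> Q2" in exI) (auto simp: Un_assoc)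
next
  case (And a b) then show ?case by fastforce
next
  case (Or a b) then show ?case by fastforce
next
  case (Mu a) then show ?case by fastforce
next
  case (Nu a) then show ?case by fastforce
qed auto

lemma PT_lift: "a' \<in> PT P a \<Longrightarrow> lift k a' \<in> PT P (lift k a)"
  by (induction a arbitrary: a' k) fastforce+

lemma PT_subst: "a' \<in> PT P a \<Longrightarrow> (\<And>n. \<rho>' n \<in> PT P (\<rho> n)) \<Longrightarrow> subst \<rho>' a' \<in> PT P (subst \<rho> a)"
proof (induction a arbitrary: a' \<rho> \<rho>')
  case (Mu a)
  have h: "\<And>n. case_nat (Var 0) (lift 0 \<circ> \<rho>') n \<in> PT P (case_nat (Var 0) (lift 0 \<circ> \<rho>) n)"
    subgoal for n using Mu.prems(2) by (cases n) (auto intro: PT_lift) done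
  from Mu.prems(1) obtain b where "a' = Mu b" "b \<in> PT P a" by auto
  then show ?case using Mu.IH[OF _ h] by auto
next
  case (Nu a)
  have h: "\<And>n. case_nat (Var 0) (lift 0 \<circ> \<rho>') n \<in> PT P (case_nat (Var 0) (lift 0 \<circ> \<rho>) n)"
    subgoal for n using Nu.prems(2) by (cases n) (auto intro: PT_lift) done
  from Nu.prems(1) obtain b where "a' = Nu b" "b \<in> PT P a" by auto
  then show ?case using Nu.IH[OF _ h] by auto
qed fastforce+

lemma PT_cls: "\<theta> \<in> PT P a \<Longrightarrow> \<chi> \<in> cls \<rho>' \<theta> \<Longrightarrow> (\<And>n. \<rho>' n \<in> PT P (\<rho> n))
   \<Longrightarrow> \<exists>\<chi>0 \<in> cls \<rho> a. \<chi> \<in> PT P \<chi>0"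
proof (induction a arbitrary: \<theta> \<chi> \<rho> \<rho>')
  case (Mu a)
  from Mu.prems(1) obtain b where b: "\<theta> = Mu b" "b \<in> PT P a" by auto
  have top: "subst \<rho>' (Mu b) \<in> PT P (subst \<rho> (Mu a))"
    using PT_subst[of "Mu b" P "Mu a" \<rho>' \<rho>] Mu.prems(3) b by auto
  show ?case
  proof (cases "\<chi> = subst \<rho>' (Mu b)")
    case True then show ?thesis using top by auto
  next
    case False
    then have c: "\<chi> \<in> cls (case_nat (subst \<rho>' (Mu b)) \<rho>') b" using Mu.prems(2) b by simp
    have "\<And>n. case_nat (subst \<rho>' (Mu b)) \<rho>' n \<in> PT P (case_nat (subst \<rho> (Mu a)) \<rho> n)"
      subgoal for n using top Mu.prems(3) by (cases n) auto done
    from Mu.IH[OF b(2) c this] obtain \<chi>0 where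
      "\<chi>0 \<in> cls (case_nat (subst \<rho> (Mu a)) \<rho>) a" "\<chi> \<in> PT P \<chi>0" by blast
    moreover have "cls (case_nat (subst \<rho> (Mu a)) \<rho>) a \<subseteq> cls \<rho> (Mu a)"
      by (simp only: cls.simps) blast
    ultimately show ?thesis by blast
  qed
next
  case (Nu a)
  from Nu.prems(1) obtain b where b: "\<theta> = Nu b" "b \<in> PT P a" by auto
  have top: "subst \<rho>' (Nu b) \<in> PT P (subst \<rho> (Nu a))"
    using PT_subst[of "Nu b" P "Nu a" \<rho>' \<rho>] Nu.prems(3) b by auto
  show ?case
  proof (cases "\<chi> = subst \<rho>' (Nu b)")
    case True then show ?thesis using top by auto
  next
    case False
    then have c: "\<chi> \<in> cls (case_nat (subst \<rho>' (Nu b)) \<rho>') b" using Nu.prems(2) b by simp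
    have "\<And>n. case_nat (subst \<rho>' (Nu b)) \<rho>' n \<in> PT P (case_nat (subst \<rho> (Nu a)) \<rho> n)"
      subgoal for n using top Nu.prems(3) by (cases n) auto done
    from Nu.IH[OF b(2) c this] obtain \<chi>0 where
      "\<chi>0 \<in> cls (case_nat (subst \<rho> (Nu a)) \<rho>) a" "\<chi> \<in> PT P \<chi>0" by blast
    moreover have "cls (case_nat (subst \<rho> (Nu a)) \<rho>) a \<subseteq> cls \<rho> (Nu a)"
      by (simp only: cls.simps) blast
    ultimately show ?thesis by blast
  qed
next
  case (And a1 a2)
  from And.prems(1) obtain b1 b2 where b: "\<theta> = And b1 b2" "b1 \<in> PT P a1" "b2 \<in> PT P a2" by auto
  have top: "subst \<rho>' \<theta> \<in> PT P (subst \<rho> (And a1 a2))"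
    using PT_subst[OF _ And.prems(3)] b by auto
  have "\<chi> = subst \<rho>' \<theta> \<or> \<chi> \<in> cls \<rho>' b1 \<or> \<chi> \<in> cls \<rho>' b2" using And.prems(2) b by auto
  moreover have "\<chi> \<in> cls \<rho>' b1 \<Longrightarrow> \<exists>\<chi>0\<in>cls \<rho> a1. \<chi> \<in> PT P \<chi>0"
    using And.IH(1)[of b1 \<chi> \<rho>' \<rho>] b(2) And.prems(3) by blast
  moreover have "\<chi> \<in> cls \<rho>' b2 \<Longrightarrow> \<exists>\<chi>0\<in>cls \<rho> a2. \<chi> \<in> PT P \<chi>0"
    using And.IH(2)[of b2 \<chi> \<rho>' \<rho>] b(3) And.prems(3) by blast
  moreover have "subst \<rho> (And a1 a2) \<in> cls \<rho> (And a1 a2)" "cls \<rho> a1 \<subseteq> cls \<rho> (And a1 a2)" "cls \<rho> a2 \<subseteq> cls \<rho> (And a1 a2)"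
    by (simp_all only: cls.simps) blast+
  ultimately show ?case using top by blast
next
  case (Or a1 a2)
  from Or.prems(1) obtain b1 b2 where b: "\<theta> = Or b1 b2" "b1 \<in> PT P a1" "b2 \<in> PT P a2" by auto
  have top: "subst \<rho>' \<theta> \<in> PT P (subst \<rho> (Or a1 a2))"
    using PT_subst[OF _ Or.prems(3)] b by auto
  have "\<chi> = subst \<rho>' \<theta> \<or> \<chi> \<in> cls \<rho>' b1 \<or> \<chi> \<in> cls \<rho>' b2" using Or.prems(2) b by auto
  moreover have "\<chi> \<in> cls \<rho>' b1 \<Longrightarrow> \<exists>\<chi>0\<in>cls \<rho> a1. \<chi> \<in> PT P \<chi>0"
    using Or.IH(1)[of b1 \<chi> \<rho>' \<rho>] b(2) Or.prems(3) by blast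
  moreover have "\<chi> \<in> cls \<rho>' b2 \<Longrightarrow> \<exists>\<chi>0\<in>cls \<rho> a2. \<chi> \<in> PT P \<chi>0"
    using Or.IH(2)[of b2 \<chi> \<rho>' \<rho>] b(3) Or.prems(3) by blast
  moreover have "subst \<rho> (Or a1 a2) \<in> cls \<rho> (Or a1 a2)" "cls \<rho> a1 \<subseteq> cls \<rho> (Or a1 a2)" "cls \<rho> a2 \<subseteq> cls \<rho> (Or a1 a2)"
    by (simp_all only: cls.simps) blast+
  ultimately show ?case using top by blast
next
  case (Dia Q a)
  from Dia.prems(1) obtain Q' b where b: "\<theta> = Dia (Q \<union> Q') b" "Q' \<subseteq> P" "b \<in> PT P a" by auto
  have top: "subst \<rho>' \<theta> \<in> PT P (subst \<rho> (Dia Q a))"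
    using PT_subst[OF _ Dia.prems(3), of \<theta> "Dia Q a"] Dia.prems(1) by auto
  have "\<chi> = subst \<rho>' \<theta> \<or> \<chi> \<in> cls \<rho>' b" using Dia.prems(2) b by auto
  moreover have "\<chi> \<in> cls \<rho>' b \<Longrightarrow> \<exists>\<chi>0\<in>cls \<rho> a. \<chi> \<in> PT P \<chi>0"
    using Dia.IH[of b \<chi> \<rho>' \<rho>] b(3) Dia.prems(3) by blast
  moreover have "subst \<rho> (Dia Q a) \<in> cls \<rho> (Dia Q a)" "cls \<rho> a \<subseteq> cls \<rho> (Dia Q a)"
    by (simp_all only: cls.simps) blast+
  ultimately show ?case using top by blast
next
  case (Box Q a)
  from Box.prems(1) obtain Q' b where b: "\<theta> = Box (Q \<union> Q') b" "Q' \<subseteq> P" "b \<in> PT P a" by auto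
  have top: "subst \<rho>' \<theta> \<in> PT P (subst \<rho> (Box Q a))"
    using PT_subst[OF _ Box.prems(3), of \<theta> "Box Q a"] Box.prems(1) by auto
  have "\<chi> = subst \<rho>' \<theta> \<or> \<chi> \<in> cls \<rho>' b" using Box.prems(2) b by auto
  moreover have "\<chi> \<in> cls \<rho>' b \<Longrightarrow> \<exists>\<chi>0\<in>cls \<rho> a. \<chi> \<in> PT P \<chi>0"
    using Box.IH[of b \<chi> \<rho>' \<rho>] b(3) Box.prems(3) by blast
  moreover have "subst \<rho> (Box Q a) \<in> cls \<rho> (Box Q a)" "cls \<rho> a \<subseteq> cls \<rho> (Box Q a)"
    by (simp_all only: cls.simps) blast+
  ultimately show ?case using top by blast
next
  case (Var n) then show ?case by auto
qed auto

lemma cls_nonvar: "x \<in> cls \<rho> a \<Longrightarrow> x \<noteq> Var n"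
  by (induction a arbitrary: \<rho>) auto

lemma PT_nonvar: "x \<in> PT P y \<Longrightarrow> (\<forall>n. y \<noteq> Var n) \<Longrightarrow> x \<noteq> Var n"
  by (cases y) auto

lemma V_up: "case_nat (Var 0) (lift 0 \<circ> Var) = Var"
  by (rule ext, case_tac x) auto

lemma self_CL: "(\<forall>n. x \<noteq> Var n) \<Longrightarrow> x \<in> CL x"
  by (cases x) (auto simp: CL_def subst_Var V_up)

theorem lemma3p4:
  fixes \<sigma> P :: "'a set" and L :: "'a fm set"
  assumes "finite P" and "\<sigma> \<inter> P = {}" and "L \<subseteq> Lmu (\<sigma> \<union> P)"
  shows "CL_P P (CL_P P L) = CL_P P L"
proof
  show "CL_P P (CL_P P L) \<subseteq> CL_P P L"
  proof
    fix \<psi> assume "\<psi> \<in> CL_P P (CL_P P L)"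
    then obtain \<chi> \<theta> \<phi>' \<phi> where h: "\<psi> \<in> PT P \<chi>" "\<chi> \<in> CL \<theta>" "\<theta> \<in> PT P \<phi>'" "\<phi>' \<in> CL \<phi>" "\<phi> \<in> L"
      by (auto simp: CL_P_def PTs_def CLs_def)
    obtain \<chi>0 where c: "\<chi>0 \<in> CL \<phi>'" "\<chi> \<in> PT P \<chi>0"
      using PT_cls[OF h(3), of \<chi> Var Var] h(2) PT_self by (auto simp: CL_def)
    have "\<chi>0 \<in> CL \<phi>" using CL_CL[OF h(4)] c(1) by blast
    moreover have "\<psi> \<in> PT P \<chi>0" using PT_trans h(1) c(2) by blast
    ultimately show "\<psi> \<in> CL_P P L" using h(5) by (auto simp: CL_P_def PTs_def CLs_def)
  qed
next
  show "CL_P P L \<subseteq> CL_P P (CL_P P L)"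
  proof
    fix \<psi> assume a: "\<psi> \<in> CL_P P L"
    then obtain \<phi>' \<phi> where h: "\<psi> \<in> PT P \<phi>'" "\<phi>' \<in> CL \<phi>" "\<phi> \<in> L"
      by (auto simp: CL_P_def PTs_def CLs_def)
    have nv: "\<forall>n. \<psi> \<noteq> Var n"
    proof -
      have "\<forall>n. \<phi>' \<noteq> Var n" using cls_nonvar h(2) by (auto simp: CL_def)
      then show ?thesis using PT_nonvar[OF h(1)] by blast
    qed
    have "\<psi> \<in> CL \<psi>" using self_CL[OF nv] .
    moreover have "\<psi> \<in> PT P \<psi>" by (rule PT_self)
    ultimately show "\<psi> \<in> CL_P P (CL_P P L)" using a by (auto simp: CL_P_def PTs_def CLs_def)
  qed
qed

end
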